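(* Let $A$ be a nonnegative random variable with a probability density function on $[0,\infty)$ and $\mathbf{E}[A]=1$, and fix $\beta\ge 0$. For $\rho>0$ define $$R(\rho)=\mathbf{E}\left[\log \frac{(\rho+1)^2\left[(1+\beta)A\rho+1\right]}{(\beta+1)\rho^2+(\beta A+2)\rho+1}\right],\qquad \bar C(\rho)=\mathbf{E}\left[\log(1+A\rho)\right].$$ Then $\lim_{\rho\to\infty}\left(\bar C(\rho)-R(\rho)\right)=0$ and $\lim_{\rho\to 0^+} R(\rho)/\bar C(\rho)=1$.
   Context: Interpretation: this concerns the channel $Y=\sqrt{A}(X+S)+Z$ with $Z\sim\mathcal{CN}(0,N)$, interference $S\sim\mathcal{CN}(0,Q)$ known noncausally to the encoder only, i.i.d. (ergodic) fading $A$ independent of $S$ known to the decoder only, input power $P$, SNR $\rho=P/N$ and interference-to-power ratio $\beta=Q/P$. $R(\rho)=I(U;Y|A)-I(U;S)$ is the rate of the dirty paper coding scheme with $X\sim\mathcal{CN}(0,P)$ independent of $S$ and auxiliary $U=X+\alpha S$, $\alpha=\rho/(1+\rho)$; $\bar C(\rho)$ is the capacity when the decoder also knows $S$. Logarithms are natural. *)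

theory Defs
  imports "HOL-Probability.Probability"
begin

text \<open>Rate of the dirty paper coding scheme, as a function of the SNR rho,
  for fading variable A on probability space M and interference ratio beta.\<close>
definition dpc_rate :: "'a measure \<Rightarrow> ('a \<Rightarrow> real) \<Rightarrow> real \<Rightarrow> real \<Rightarrow> real" where
  "dpc_rate M A \<beta> \<rho> = prob_space.expectation M (\<lambda>\<omega>.
     ln ((\<rho> + 1)^2 * ((1 + \<beta>) * A \<omega> * \<rho> + 1) /
         ((\<beta> + 1) * \<rho>^2 + (\<beta> * A \<omega> + 2) * \<rho> + 1)))"

text \<open>Capacity when the decoder also knows the interference.\<close>
definition cap_bar :: "'a measure \<Rightarrow> ('a \<Rightarrow> real) \<Rightarrow> real \<Rightarrow> real" where
  "cap_bar M A \<rho> = prob_space.expectation M (\<lambda>\<omega>. ln (1 + A \<omega> * \<rho>))"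

end

theory Submission
  imports Defs "HOL-Real_Asymp.Real_Asymp"
begin

lemma lim1:
  fixes a b :: real assumes "a > 0" "b \<ge> 0"
  shows "((\<lambda>\<rho>. ln (1 + a * \<rho>) - ln ((\<rho> + 1)^2 * ((1 + b) * a * \<rho> + 1) /
         ((b + 1) * \<rho>^2 + (b * a + 2) * \<rho> + 1))) \<longlongrightarrow> 0) at_top"
proof -
  have "((\<lambda>\<rho>. ln (1 + a * \<rho>) - ln ((\<rho> + 1)^2 * ((1 + b) * a * \<rho> + 1) /
         ((b + 1) * \<rho>^2 + (b * a + 2) * \<rho> + 1))) \<longlongrightarrow> ln a - ln ((1 + b) * a * inverse (b + 1))) at_top"
    using assms by real_asymp
  moreover have "(1 + b) * a * inverse (b + 1) = a" using assms by (simp add: field_simps)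
  ultimately show ?thesis by simp
qed

lemma lim2:
  fixes a b :: real assumes "a \<ge> 0" "b \<ge> 0"
  shows "((\<lambda>t. t * ln ((inverse t + 1)^2 * ((1 + b) * a * inverse t + 1) /
         ((b + 1) * (inverse t)^2 + (b * a + 2) * inverse t + 1))) \<longlongrightarrow> a) at_top"
proof -
  have "((\<lambda>t. t * ln ((inverse t + 1)^2 * ((1 + b) * a * inverse t + 1) /
         ((b + 1) * (inverse t)^2 + (b * a + 2) * inverse t + 1))) \<longlongrightarrow> (1 + b) * a - b * a) at_top"
    using assms by real_asymp
  then show ?thesis by (simp add: algebra_simps)
qed

lemma lim3:
  fixes a :: real assumes "a \<ge> 0"
  shows "((\<lambda>t. t * ln (1 + a * inverse t)) \<longlongrightarrow> a) at_top"
  using assms by real_asymp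

lemma bnd1:
  fixes a b \<rho> :: real assumes a: "a \<ge> 0" and b: "b \<ge> 0" and r: "\<rho> > 0"
  shows "\<bar>ln (1 + a * \<rho>) - ln ((\<rho> + 1)^2 * ((1 + b) * a * \<rho> + 1) /
         ((b + 1) * \<rho>^2 + (b * a + 2) * \<rho> + 1))\<bar> \<le> ln (1 + b) + b + b * a"
proof -
  define E where "E = 1 + a * \<rho>"
  define N where "N = (\<rho> + 1)^2 * ((1 + b) * a * \<rho> + 1)"
  define D where "D = (b + 1) * \<rho>^2 + (b * a + 2) * \<rho> + 1"
  have E: "E > 0" using a r by (simp add: E_def add_pos_nonneg)
  have sq: "(\<rho> + 1)^2 > 0" using r by simp
  have D1: "(\<rho> + 1)^2 \<le> D" using a b r unfolding D_def by (simp add: power2_eq_square algebra_simps)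
  have D: "D > 0" using sq D1 by linarith
  have "0 \<le> (1 + b) * a * \<rho>" using a b r by simp
  then have F: "(1 + b) * a * \<rho> + 1 > 0" by linarith
  have N: "N > 0" unfolding N_def using sq F by simp
  have eq: "ln E - ln (N / D) = ln (E * D / N)"
    using E N D by (simp add: ln_div ln_mult)
  have lo1: "N \<le> (1 + b) * E * D"
  proof -
    have "N \<le> D * ((1 + b) * a * \<rho> + 1)" unfolding N_def using D1 F by (simp add: mult_right_mono)
    also have "\<dots> \<le> D * ((1 + b) * E)" using D b unfolding E_def
      by (intro mult_left_mono) (auto simp: algebra_simps)
    finally show ?thesis by (simp add: algebra_simps)
  qed
  have lo: "1 / (1 + b) \<le> E * D / N" using lo1 N b by (simp add: field_simps)
  have up1: "E * D \<le> (1 + b + b * a) * N"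
  proof -
    have e: "E \<le> (1 + b) * a * \<rho> + 1" unfolding E_def using a b r by (simp add: algebra_simps)
    have d: "D \<le> (1 + b + b * a) * (\<rho> + 1)^2"
    proof -
      have "(1 + b + b * a) * (\<rho> + 1)^2 - D = 2 * b * \<rho> + b + b * a * (\<rho>^2 + \<rho> + 1)"
        unfolding D_def by (simp add: power2_eq_square algebra_simps)
      moreover have "0 \<le> b * a * (\<rho>^2 + \<rho> + 1)" using a b r by simp
      moreover have "0 \<le> 2 * b * \<rho>" using b r by simp
      ultimately show ?thesis using b by linarith
    qed
    have "E * D \<le> ((1 + b) * a * \<rho> + 1) * ((1 + b + b * a) * (\<rho> + 1)^2)"
      using e d E D by (intro mult_mono) auto
    also have "\<dots> = (1 + b + b * a) * N" unfolding N_def by (simp add: algebra_simps)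
    finally show ?thesis .
  qed
  have up: "E * D / N \<le> 1 + b + b * a" using up1 N by (simp add: field_simps)
  have q: "E * D / N > 0" using E D N by simp
  have l1: "ln (E * D / N) \<ge> - ln (1 + b)"
  proof -
    have "ln (1 / (1 + b)) \<le> ln (E * D / N)" using lo b q by (subst ln_le_cancel_iff) auto
    then show ?thesis using b by (simp add: ln_div)
  qed
  have l2: "ln (E * D / N) \<le> b + b * a"
  proof -
    have "ln (E * D / N) \<le> ln (1 + b + b * a)" using up q by (subst ln_le_cancel_iff) auto
    also have "\<dots> \<le> b + b * a" using ln_le_minus_one[of "1 + b + b * a"] a b
      by (simp add: add_pos_nonneg)
    finally show ?thesis .
  qed
  have "ln (1 + b) \<ge> 0" using b by simp
  moreover have "0 \<le> b * a" using a b by simp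
  ultimately have "\<bar>ln (E * D / N)\<bar> \<le> ln (1 + b) + b + b * a" using l1 l2 b
    unfolding abs_le_iff by linarith
  then show ?thesis using eq unfolding E_def N_def D_def by simp
qed

lemma bnd2:
  fixes a b \<rho> :: real assumes a: "a \<ge> 0" and b: "b \<ge> 0" and r: "\<rho> > 0" and r1: "\<rho> \<le> 1"
  shows "\<bar>ln ((\<rho> + 1)^2 * ((1 + b) * a * \<rho> + 1) /
         ((b + 1) * \<rho>^2 + (b * a + 2) * \<rho> + 1))\<bar> \<le> \<rho> * (b + (1 + b) * a)"
proof -
  define N where "N = (\<rho> + 1)^2 * ((1 + b) * a * \<rho> + 1)"
  define D where "D = (b + 1) * \<rho>^2 + (b * a + 2) * \<rho> + 1"
  have sq: "(\<rho> + 1)^2 > 0" using r by simp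
  have D1: "(\<rho> + 1)^2 \<le> D" using a b r unfolding D_def by (simp add: power2_eq_square algebra_simps)
  have D: "D > 0" using sq D1 by linarith
  have F1: "(1 + b) * a * \<rho> + 1 \<ge> 1" using a b r by simp
  have N: "N > 0" unfolding N_def using sq F1 by simp
  have q: "N / D > 0" using N D by simp
  have up: "ln (N / D) \<le> (1 + b) * a * \<rho>"
  proof -
    have "N \<le> D * ((1 + b) * a * \<rho> + 1)"
      using D1 F1 unfolding N_def by (simp add: mult_right_mono)
    then have "N / D \<le> (1 + b) * a * \<rho> + 1"
      using D by (simp add: divide_le_eq mult.commute)
    then have "ln (N / D) \<le> ln ((1 + b) * a * \<rho> + 1)" using q by (subst ln_le_cancel_iff) auto
    also have "\<dots> \<le> (1 + b) * a * \<rho>" using ln_le_minus_one[of "(1 + b) * a * \<rho> + 1"] F1 by simp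
    finally show ?thesis .
  qed
  have lo: "ln (N / D) \<ge> - (\<rho> * (b + b * a))"
  proof -
    have "ln (D / N) \<le> D / N - 1" using ln_le_minus_one[of "D / N"] N D by simp
    then have "ln (N / D) \<ge> 1 - D / N" using N D by (simp add: ln_div)
    moreover have N1: "N \<ge> (\<rho> + 1)^2" unfolding N_def using sq F1
      by (metis mult_le_cancel_left1 less_le_not_le)
    have "D / N \<le> D / (\<rho> + 1)^2" using N1 sq D N by (intro divide_left_mono) auto
    moreover have "D / (\<rho> + 1)^2 - 1 \<le> \<rho> * (b + b * a)"
    proof -
      have "D - (\<rho> + 1)^2 = b * \<rho>^2 + b * a * \<rho>" unfolding D_def by (simp add: power2_eq_square algebra_simps)
      moreover have "b * \<rho>^2 + b * a * \<rho> \<le> \<rho> * (b + b * a) * (\<rho> + 1)^2"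
      proof -
        have "b * \<rho>^2 + b * a * \<rho> = \<rho> * (b * \<rho> + b * a)" by (simp add: power2_eq_square algebra_simps)
        also have "\<dots> \<le> \<rho> * (b + b * a)" using r r1 b a by (intro mult_left_mono) (auto simp: mult_left_le)
        also have "\<dots> \<le> \<rho> * (b + b * a) * (\<rho> + 1)^2"
        proof -
          have "1 \<le> (\<rho> + 1)^2" using r by (intro one_le_power) simp
          moreover have "0 \<le> \<rho> * (b + b * a)" using r a b by simp
          ultimately show ?thesis using mult_left_mono[of 1 "(\<rho> + 1)^2" "\<rho> * (b + b * a)"] by simp
        qed
        finally show ?thesis .
      qed
      ultimately have "D - (\<rho> + 1)^2 \<le> \<rho> * (b + b * a) * (\<rho> + 1)^2" by simp
      then show ?thesis using sq by (simp add: field_simps)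
    qed
    ultimately show ?thesis by linarith
  qed
  have "\<rho> * (b + b * a) \<le> \<rho> * (b + (1 + b) * a)" using r a b by (intro mult_left_mono) (auto simp: algebra_simps)
  moreover have "(1 + b) * a * \<rho> \<le> \<rho> * (b + (1 + b) * a)" using r a b by (simp add: algebra_simps)
  ultimately show ?thesis using up lo unfolding N_def D_def by (simp add: abs_le_iff)
qed

theorem mainTheorem1:
  fixes M :: "'a measure" and A :: "'a \<Rightarrow> real" and f :: "real \<Rightarrow> ennreal" and \<beta> :: real
  assumes "prob_space M"
    and "distributed M lborel A f"
    and "AE \<omega> in M. A \<omega> \<ge> 0"
    and "integrable M A"
    and "prob_space.expectation M A = 1"
    and "\<beta> \<ge> 0"
  shows "((\<lambda>\<rho>. cap_bar M A \<rho> - dpc_rate M A \<beta> \<rho>) \<longlongrightarrow> 0) at_top \<and>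
         ((\<lambda>\<rho>. dpc_rate M A \<beta> \<rho> / cap_bar M A \<rho>) \<longlongrightarrow> 1) (at_right 0)"
proof -
  interpret P: prob_space M by fact
  note b = assms(6)
  have Am: "A \<in> borel_measurable M" using distributed_measurable[OF assms(2)] by simp
  have Aint: "integrable M A" by fact
  have Anz: "AE \<omega> in M. A \<omega> \<noteq> 0"
  proof (rule AE_distrD[OF distributed_measurable[OF assms(2)]])
    have d: "distr M lborel A = density lborel f" and fm: "f \<in> borel_measurable lborel"
      using assms(2) unfolding distributed_def by auto
    have "AE x in density lborel f. x \<noteq> 0"
      unfolding AE_density[OF fm] using AE_lborel_singleton[of "0::real"] by eventually_elim auto
    then show "AE x in distr M lborel A. x \<noteq> 0" unfolding d .
  qed
  have Apos: "AE \<omega> in M. A \<omega> > 0" using Anz assms(3) by eventually_elim auto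
  define c where "c = (\<lambda>\<rho> \<omega>. ln (1 + A \<omega> * \<rho>))"
  define r where "r = (\<lambda>\<rho> \<omega>. ln ((\<rho> + 1)^2 * ((1 + \<beta>) * A \<omega> * \<rho> + 1) /
         ((\<beta> + 1) * \<rho>^2 + (\<beta> * A \<omega> + 2) * \<rho> + 1)))"
  have cap: "cap_bar M A \<rho> = integral\<^sup>L M (c \<rho>)" for \<rho> unfolding cap_bar_def c_def by simp
  have dpc: "dpc_rate M A \<beta> \<rho> = integral\<^sup>L M (r \<rho>)" for \<rho> unfolding dpc_rate_def r_def by simp
  have cm: "c \<rho> \<in> borel_measurable M" for \<rho> unfolding c_def using Am by measurable
  have rm: "r \<rho> \<in> borel_measurable M" for \<rho> unfolding r_def using Am by measurable
  have cint: "integrable M (c \<rho>)" if "\<rho> > 0" for \<rho>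
  proof (rule Bochner_Integration.integrable_bound[where f="\<lambda>\<omega>. A \<omega> * \<rho>"])
    show "integrable M (\<lambda>\<omega>. A \<omega> * \<rho>)" using Aint by simp
    show "AE \<omega> in M. norm (c \<rho> \<omega>) \<le> norm (A \<omega> * \<rho>)" using assms(3)
    proof eventually_elim
      case (elim \<omega>)
      then have "0 \<le> A \<omega> * \<rho>" using that by simp
      then have "ln (1 + A \<omega> * \<rho>) \<le> A \<omega> * \<rho>" "0 \<le> ln (1 + A \<omega> * \<rho>)"
        using ln_le_minus_one[of "1 + A \<omega> * \<rho>"] by auto
      then show ?case unfolding c_def by simp
    qed
  qed (fact cm)
  define w1 where "w1 = (\<lambda>\<omega>. ln (1 + \<beta>) + \<beta> + \<beta> * A \<omega>)"
  have w1int: "integrable M w1" unfolding w1_def using Aint by simp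
  have gb: "AE \<omega> in M. norm (c \<rho> \<omega> - r \<rho> \<omega>) \<le> w1 \<omega>" if "\<rho> > 0" for \<rho>
    using assms(3)
  proof eventually_elim
    case (elim \<omega>)
    show ?case using bnd1[OF elim b that] unfolding c_def r_def w1_def by (simp add: mult.commute)
  qed
  have gint: "integrable M (\<lambda>\<omega>. c \<rho> \<omega> - r \<rho> \<omega>)" if "\<rho> > 0" for \<rho>
  proof (rule Bochner_Integration.integrable_bound[where f=w1])
    show "AE \<omega> in M. norm (c \<rho> \<omega> - r \<rho> \<omega>) \<le> norm (w1 \<omega>)"
      using gb[OF that] by eventually_elim auto
  qed (use w1int cm rm in auto)
  have rint: "integrable M (r \<rho>)" if "\<rho> > 0" for \<rho>
  proof -
    have "integrable M (\<lambda>\<omega>. c \<rho> \<omega> - (c \<rho> \<omega> - r \<rho> \<omega>))"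
      using cint[OF that] gint[OF that] by (rule Bochner_Integration.integrable_diff)
    then show ?thesis by simp
  qed
  have part1: "((\<lambda>\<rho>. cap_bar M A \<rho> - dpc_rate M A \<beta> \<rho>) \<longlongrightarrow> 0) at_top"
  proof -
    have "((\<lambda>\<rho>. integral\<^sup>L M (\<lambda>\<omega>. c \<rho> \<omega> - r \<rho> \<omega>)) \<longlongrightarrow> integral\<^sup>L M (\<lambda>\<omega>. 0::real)) at_top"
    proof (rule integral_dominated_convergence_at_top[where w=w1])
      show "AE \<omega> in M. ((\<lambda>\<rho>. c \<rho> \<omega> - r \<rho> \<omega>) \<longlongrightarrow> 0) at_top" using Apos
      proof eventually_elim
        case (elim \<omega>)
        show ?case using lim1[OF elim b] unfolding c_def r_def by (simp add: mult.commute)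
      qed
      show "\<forall>\<^sub>F \<rho> in at_top. AE \<omega> in M. norm (c \<rho> \<omega> - r \<rho> \<omega>) \<le> w1 \<omega>"
        using eventually_gt_at_top[of "0::real"] by eventually_elim (rule gb)
    qed (use w1int cm rm in auto)
    moreover have "\<forall>\<^sub>F \<rho> in at_top. integral\<^sup>L M (\<lambda>\<omega>. c \<rho> \<omega> - r \<rho> \<omega>) = cap_bar M A \<rho> - dpc_rate M A \<beta> \<rho>"
      using eventually_gt_at_top[of "0::real"]
    proof eventually_elim
      case (elim \<rho>)
      show ?case unfolding cap dpc using cint[OF elim] rint[OF elim] by (rule Bochner_Integration.integral_diff)
    qed
    ultimately show ?thesis by (simp add: tendsto_cong)
  qed
  define w2 where "w2 = (\<lambda>\<omega>. \<beta> + (1 + \<beta>) * A \<omega>)"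
  have w2int: "integrable M w2" unfolding w2_def using Aint by simp
  have T1: "((\<lambda>t. integral\<^sup>L M (\<lambda>\<omega>. t * r (inverse t) \<omega>)) \<longlongrightarrow> integral\<^sup>L M A) at_top"
  proof (rule integral_dominated_convergence_at_top[where w=w2])
    show "AE \<omega> in M. ((\<lambda>t. t * r (inverse t) \<omega>) \<longlongrightarrow> A \<omega>) at_top" using assms(3)
    proof eventually_elim
      case (elim \<omega>)
      show ?case using lim2[OF elim b] unfolding r_def by (simp add: mult.commute)
    qed
    show "\<forall>\<^sub>F t in at_top. AE \<omega> in M. norm (t * r (inverse t) \<omega>) \<le> w2 \<omega>"
      using eventually_ge_at_top[of "1::real"]
    proof eventually_elim
      case (elim t)
      note tt = elim
      show ?case using assms(3)
      proof eventually_elim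
        case (elim \<omega>)
        have i: "inverse t > 0" "inverse t \<le> 1" using tt by (auto simp: inverse_le_1_iff)
        have "\<bar>r (inverse t) \<omega>\<bar> \<le> inverse t * w2 \<omega>"
          using bnd2[OF elim b i] unfolding r_def w2_def by (simp add: mult.commute)
        then have "t * \<bar>r (inverse t) \<omega>\<bar> \<le> t * (inverse t * w2 \<omega>)" using tt by (intro mult_left_mono) auto
        moreover have "t * (inverse t * w2 \<omega>) = w2 \<omega>" using tt by simp
        ultimately show ?case using tt by (simp add: abs_mult)
      qed
    qed
  qed (use w2int Am rm in auto)
  have T2: "((\<lambda>t. integral\<^sup>L M (\<lambda>\<omega>. t * c (inverse t) \<omega>)) \<longlongrightarrow> integral\<^sup>L M A) at_top"
  proof (rule integral_dominated_convergence_at_top[where w=A])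
    show "AE \<omega> in M. ((\<lambda>t. t * c (inverse t) \<omega>) \<longlongrightarrow> A \<omega>) at_top" using assms(3)
    proof eventually_elim
      case (elim \<omega>)
      show ?case using lim3[OF elim] unfolding c_def by simp
    qed
    show "\<forall>\<^sub>F t in at_top. AE \<omega> in M. norm (t * c (inverse t) \<omega>) \<le> A \<omega>"
      using eventually_gt_at_top[of "0::real"]
    proof eventually_elim
      case (elim t)
      note tt = elim
      show ?case using assms(3)
      proof eventually_elim
        case (elim \<omega>)
        have "0 \<le> A \<omega> * inverse t" using tt elim by simp
        then have "ln (1 + A \<omega> * inverse t) \<le> A \<omega> * inverse t" "0 \<le> ln (1 + A \<omega> * inverse t)"
          using ln_le_minus_one[of "1 + A \<omega> * inverse t"] by auto
        then have "t * ln (1 + A \<omega> * inverse t) \<le> t * (A \<omega> * inverse t)" "0 \<le> t * ln (1 + A \<omega> * inverse t)"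
          using tt by (auto intro: mult_left_mono)
        moreover have "t * (A \<omega> * inverse t) = A \<omega>" using tt by simp
        ultimately have "\<bar>t * ln (1 + A \<omega> * inverse t)\<bar> \<le> A \<omega>" by simp
        then show ?case unfolding c_def by simp
      qed
    qed
  qed (use Aint Am cm in auto)
  have part2: "((\<lambda>\<rho>. dpc_rate M A \<beta> \<rho> / cap_bar M A \<rho>) \<longlongrightarrow> 1) (at_right 0)"
    unfolding filterlim_at_right_to_top
  proof -
    have E1: "integral\<^sup>L M A = 1" using assms(5) by simp
    have "((\<lambda>t. integral\<^sup>L M (\<lambda>\<omega>. t * r (inverse t) \<omega>) / integral\<^sup>L M (\<lambda>\<omega>. t * c (inverse t) \<omega>)) \<longlongrightarrow> 1 / 1) at_top"
      using tendsto_divide[OF T1 T2] E1 by simp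
    moreover have "\<forall>\<^sub>F t in at_top. integral\<^sup>L M (\<lambda>\<omega>. t * r (inverse t) \<omega>) / integral\<^sup>L M (\<lambda>\<omega>. t * c (inverse t) \<omega>)
        = dpc_rate M A \<beta> (inverse t) / cap_bar M A (inverse t)"
      using eventually_gt_at_top[of "0::real"]
    proof eventually_elim
      case (elim t)
      then show ?case unfolding cap dpc by simp
    qed
    ultimately show "((\<lambda>t. dpc_rate M A \<beta> (inverse t) / cap_bar M A (inverse t)) \<longlongrightarrow> 1) at_top"
      by (simp add: tendsto_cong)
  qed
  show ?thesis using part1 part2 by simp
qed

end
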